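(* For a ring $R$, the following are equivalent: (1) $R$ is a DT ring; (2) $R$ is a semi-tripotent ring.
   Context: All rings are associative with identity. $J(R)$ is the Jacobson radical, $U(R)$ the group of units. $\Delta(R)=\{x\in R: x+u\in U(R)\text{ for all }u\in U(R)\}$. $\mathrm{Tr}(R)=\{x\in R: x^3=x\}$. A ring $R$ is a DT ring if every $r\in R$ can be written $r=e+d$ with $e\in\mathrm{Tr}(R)$ and $d\in\Delta(R)$. A ring $R$ is semi-tripotent if every $r\in R$ can be written $r=e+j$ with $e\in\mathrm{Tr}(R)$ and $j\in J(R)$. *)

theory Defs
  imports Main
begin

definition unit_of :: "'a::ring_1 \<Rightarrow> bool" where
  "unit_of u \<longleftrightarrow> (\<exists>v. u * v = 1 \<and> v * u = 1)"

definition Units :: "'a::ring_1 set" where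
  "Units = {u. unit_of u}"

definition left_ideal :: "'a::ring_1 set \<Rightarrow> bool" where
  "left_ideal I \<longleftrightarrow> 0 \<in> I \<and> (\<forall>x\<in>I. \<forall>y\<in>I. x - y \<in> I) \<and> (\<forall>r. \<forall>x\<in>I. r * x \<in> I)"

definition maximal_left_ideal :: "'a::ring_1 set \<Rightarrow> bool" where
  "maximal_left_ideal M \<longleftrightarrow> left_ideal M \<and> M \<noteq> UNIV \<and>
     (\<forall>I. left_ideal I \<and> M \<subseteq> I \<longrightarrow> I = M \<or> I = UNIV)"

definition Jac :: "'a::ring_1 set" where
  "Jac = \<Inter> {M. maximal_left_ideal M}"

definition Delta :: "'a::ring_1 set" where
  "Delta = {x. \<forall>u\<in>Units. x + u \<in> Units}"

definition Tr :: "'a::ring_1 set" where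
  "Tr = {x. x ^ 3 = x}"

definition DT_ring :: "'a::ring_1 itself \<Rightarrow> bool" where
  "DT_ring _ \<longleftrightarrow> (\<forall>r::'a. \<exists>e\<in>Tr. \<exists>d\<in>Delta. r = e + d)"

definition semi_tripotent :: "'a::ring_1 itself \<Rightarrow> bool" where
  "semi_tripotent _ \<longleftrightarrow> (\<forall>r::'a. \<exists>e\<in>Tr. \<exists>j\<in>Jac. r = e + j)"

end

theory Submission
  imports Defs
begin

lemma unit_mult: "unit_of (u::'a::ring_1) \<Longrightarrow> unit_of v \<Longrightarrow> unit_of (u*v)"
  unfolding unit_of_def
proof -
  assume "\<exists>u'. u * u' = 1 \<and> u' * u = 1" "\<exists>v'. v * v' = 1 \<and> v' * v = 1"
  then obtain u' v' where a: "u * u' = 1" "u' * u = 1" "v * v' = 1" "v' * v = 1" by blast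
  have "(u*v)*(v'*u') = 1" by (metis a(1,3) mult.assoc mult_1_right)
  moreover have "(v'*u')*(u*v) = 1" by (metis a(2,4) mult.assoc mult_1_right)
  ultimately show "\<exists>w. u * v * w = 1 \<and> w * (u * v) = 1" by blast
qed

lemma unit_one: "unit_of (1::'a::ring_1)" unfolding unit_of_def by auto

lemma unit_neg: "unit_of (u::'a::ring_1) \<Longrightarrow> unit_of (-u)"
  unfolding unit_of_def by (metis minus_mult_minus)

lemma left_ideal_Jac: "left_ideal (Jac :: 'a::ring_1 set)"
  unfolding left_ideal_def Jac_def maximal_left_ideal_def by auto

lemma max_ideal_exists:
  fixes L :: "'a::ring_1 set"
  assumes "left_ideal L" "1 \<notin> L"
  shows "\<exists>M. maximal_left_ideal M \<and> L \<subseteq> M"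
proof -
  let ?A = "{I. left_ideal I \<and> L \<subseteq> I \<and> 1 \<notin> I}"
  have "\<exists>M\<in>?A. \<forall>X\<in>?A. M \<subseteq> X \<longrightarrow> X = M"
  proof (rule subset_Zorn_nonempty)
    show "?A \<noteq> {}" using assms by blast
  next
    fix C assume C: "C \<noteq> {}" "subset.chain ?A C"
    hence sub: "C \<subseteq> ?A" and ch: "\<forall>X\<in>C. \<forall>Y\<in>C. X \<subseteq> Y \<or> Y \<subseteq> X"
      unfolding subset.chain_def by auto
    have "left_ideal (\<Union>C)" unfolding left_ideal_def
    proof (intro conjI ballI allI)
      show "0 \<in> \<Union>C" using C sub by (auto simp: left_ideal_def)
    next
      fix x y assume "x \<in> \<Union>C" "y \<in> \<Union>C"
      then obtain X Y where XY: "X \<in> C" "Y \<in> C" "x \<in> X" "y \<in> Y" by blast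
      show "x - y \<in> \<Union>C"
      proof (cases "X \<subseteq> Y")
        case True
        hence "x \<in> Y" using XY by blast
        moreover have "left_ideal Y" using XY sub by blast
        ultimately have "x - y \<in> Y" using XY unfolding left_ideal_def by blast
        thus ?thesis using XY by blast
      next
        case False hence "Y \<subseteq> X" using ch XY by blast
        hence "y \<in> X" using XY by blast
        moreover have "left_ideal X" using XY sub by blast
        ultimately have "x - y \<in> X" using XY unfolding left_ideal_def by blast
        thus ?thesis using XY by blast
      qed
    next
      fix r x assume "x \<in> \<Union>C"
      then obtain X where X: "X \<in> C" "x \<in> X" by blast
      hence "left_ideal X" using sub by blast
      hence "r * x \<in> X" using X unfolding left_ideal_def by blast
      thus "r * x \<in> \<Union>C" using X by blast
    qed
    thus "\<Union>C \<in> ?A" using C sub by auto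
  qed
  then obtain M where M: "M \<in> ?A" "\<forall>X\<in>?A. M \<subseteq> X \<longrightarrow> X = M" by blast
  have "maximal_left_ideal M" unfolding maximal_left_ideal_def
  proof (intro conjI allI impI)
    show "left_ideal M" using M by auto
    show "M \<noteq> UNIV" using M by auto
    fix I assume I: "left_ideal I \<and> M \<subseteq> I"
    show "I = M \<or> I = UNIV"
    proof (cases "1 \<in> I")
      case True
      have "\<And>r. r \<in> I" using I True unfolding left_ideal_def by (metis mult_1_right)
      thus ?thesis by auto
    next
      case False thus ?thesis using I M by auto
    qed
  qed
  thus ?thesis using M by auto
qed


lemma Jac_one_plus_unit:
  fixes y :: "'a::ring_1"
  assumes y: "y \<in> Jac"
  shows "unit_of (1 + y)"
proof -
  have J: "left_ideal (Jac::'a set)" by (rule left_ideal_Jac)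
  have leftinv: "\<exists>z. z * (1 + y') = 1" if y': "y' \<in> (Jac::'a set)" for y'
  proof (rule ccontr)
    assume nz: "\<not> (\<exists>z. z * (1 + y') = 1)"
    let ?L = "{r * (1 + y') | r. True}"
    have "left_ideal ?L" unfolding left_ideal_def
    proof (intro conjI ballI allI)
      show "0 \<in> ?L" by (metis (mono_tags, lifting) mem_Collect_eq mult_zero_left)
      fix a b assume "a \<in> ?L" "b \<in> ?L"
      then obtain r s where "a = r*(1+y')" "b = s*(1+y')" by blast
      hence "a - b = (r - s)*(1+y')" by (simp add: algebra_simps)
      thus "a - b \<in> ?L" by blast
    next
      fix t a assume "a \<in> ?L"
      then obtain r where "a = r*(1+y')" by blast
      hence "t * a = (t*r)*(1+y')" by (simp add: mult.assoc)
      thus "t * a \<in> ?L" by blast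
    qed
    moreover have "1 \<notin> ?L" using nz by auto
    ultimately obtain M where M: "maximal_left_ideal M" "?L \<subseteq> M" using max_ideal_exists by blast
    have "y' \<in> M" using y' M(1) unfolding Jac_def by auto
    moreover have "1 + y' \<in> M" using M(2) by (metis (mono_tags, lifting) mem_Collect_eq mult_1_left subsetD)
    ultimately have "(1 + y') - y' \<in> M" using M(1) unfolding maximal_left_ideal_def left_ideal_def by blast
    hence "1 \<in> M" by simp
    hence "\<And>r. r \<in> M" using M(1) unfolding maximal_left_ideal_def left_ideal_def by (metis mult_1_right)
    thus False using M(1) unfolding maximal_left_ideal_def by auto
  qed
  obtain z where z: "z * (1 + y) = 1" using leftinv y by blast
  have zy: "- (z * y) \<in> Jac"
  proof -
    have "z * y \<in> Jac" using J y unfolding left_ideal_def by blast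
    moreover have "0 \<in> (Jac::'a set)" using J unfolding left_ideal_def by blast
    ultimately have "0 - z*y \<in> Jac" using J unfolding left_ideal_def by blast
    thus ?thesis by simp
  qed
  obtain w where w: "w * (1 + - (z*y)) = 1" using leftinv zy by blast
  have zeq: "z = 1 + - (z*y)" using z by (simp add: algebra_simps)
  have wz: "w * z = 1" using w zeq by simp
  have "w = w * (z * (1 + y))" using z by simp
  also have "\<dots> = 1 + y" using wz by (simp add: mult.assoc[symmetric])
  finally have "(1 + y) * z = 1" using wz by simp
  thus ?thesis using z unfolding unit_of_def by blast
qed

lemma Jac_sub_Delta: "(Jac::'a::ring_1 set) \<subseteq> Delta"
proof
  fix j :: 'a assume j: "j \<in> Jac"
  show "j \<in> Delta" unfolding Delta_def Units_def mem_Collect_eq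
  proof (intro ballI)
    fix u :: 'a assume "u \<in> Collect unit_of"
    then obtain v where v: "u*v = 1" "v*u = 1" unfolding unit_of_def by blast
    have "v * j \<in> Jac" using left_ideal_Jac j unfolding left_ideal_def by blast
    hence "unit_of (1 + v*j)" by (rule Jac_one_plus_unit)
    moreover have "unit_of u" using v unfolding unit_of_def by blast
    ultimately have "unit_of (u * (1 + v*j))" by (simp add: unit_mult)
    moreover have "u * (1 + v*j) = j + u" using v by (simp add: algebra_simps mult.assoc[symmetric])
    ultimately show "unit_of (j + u)" by simp
  qed
qed


lemma Delta_unit: "d \<in> Delta \<Longrightarrow> unit_of u \<Longrightarrow> unit_of (d + (u::'a::ring_1))"
  unfolding Delta_def Units_def by auto

lemma Delta_add: "x \<in> Delta \<Longrightarrow> y \<in> Delta \<Longrightarrow> x + (y::'a::ring_1) \<in> Delta"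
  unfolding Delta_def Units_def by (auto simp: add.assoc)

lemma Delta_neg: assumes "x \<in> Delta" shows "- (x::'a::ring_1) \<in> Delta"
  unfolding Delta_def Units_def mem_Collect_eq
proof
  fix u :: 'a assume "u \<in> Collect unit_of"
  hence "unit_of (-u)" using unit_neg by auto
  hence "unit_of (x + - u)" by (rule Delta_unit[OF assms])
  hence "unit_of (- (x + - u))" by (rule unit_neg)
  thus "unit_of (- x + u)" by simp
qed

lemma unit_minus_Delta: "unit_of u \<Longrightarrow> d \<in> Delta \<Longrightarrow> unit_of (u - (d::'a::ring_1))"
  using Delta_unit[OF Delta_neg] by (simp add: add.commute)

lemma Delta_lmult: assumes "x \<in> Delta" "unit_of u" shows "u * (x::'a::ring_1) \<in> Delta"
  unfolding Delta_def Units_def mem_Collect_eq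
proof
  fix w :: 'a assume w: "w \<in> Collect unit_of"
  obtain v where v: "u*v = 1" "v*u = 1" using assms(2) unfolding unit_of_def by blast
  have "unit_of v" using v unfolding unit_of_def by blast
  hence "unit_of (v*w)" using w unit_mult by auto
  hence "unit_of (x + v*w)" using assms(1) Delta_unit by auto
  hence "unit_of (u * (x + v*w))" using assms(2) unit_mult by auto
  moreover have "u * (x + v*w) = u*x + w" using v by (simp add: algebra_simps mult.assoc[symmetric])
  ultimately show "unit_of (u*x + w)" by simp
qed

lemma Delta_mult: assumes x: "x \<in> Delta" and y: "y \<in> Delta" shows "x * (y::'a::ring_1) \<in> Delta"
  unfolding Delta_def Units_def mem_Collect_eq
proof
  fix u :: 'a assume "u \<in> Collect unit_of"
  hence u: "unit_of u" by simp
  obtain v where v: "u*v = 1" "v*u = 1" using u unfolding unit_of_def by blast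
  have yy: "u * y \<in> Delta" using Delta_lmult y u by blast
  have "unit_of v" using v unfolding unit_of_def by blast
  hence "v * (u*y) \<in> Delta" using Delta_lmult yy by blast
  hence "unit_of (v*(u*y) + 1)" using Delta_unit unit_one by blast
  hence "unit_of (1 + v*(u*y))" by (simp add: add.commute)
  moreover have "unit_of (x + u)" using x u Delta_unit by blast
  ultimately have "unit_of ((x + u) * (1 + v*(u*y)))" using unit_mult by blast
  moreover have "(x + u) * (1 + v*(u*y)) = x*y + u + (x + u*y)"
    using v by (simp add: algebra_simps mult.assoc[symmetric])
  moreover have "x + u*y \<in> Delta" using x yy Delta_add by blast
  ultimately have "unit_of (x*y + u + (x + u*y) - (x + u*y))" using unit_minus_Delta by metis
  thus "unit_of (x*y + u)" by simp
qed

lemma idem_unit: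
  fixes f x :: "'a::ring_1"
  assumes ff: "f*f = f" and x: "x \<in> Delta"
  shows "unit_of (1 + f*x)"
proof -
  have ff': "\<And>y. f*(f*y) = f*y" using ff by (metis mult.assoc)
  define b where "b = f*x*(1-f)"
  define c where "c = (1-f)*x*f"
  have bb: "b*b = 0" unfolding b_def by (simp add: algebra_simps ff ff')
  have cc: "c*c = 0" unfolding c_def by (simp add: algebra_simps ff ff')
  have ub: "unit_of (1 - b)" unfolding unit_of_def
    by (rule exI[of _ "1+b"]) (simp add: algebra_simps bb)
  have uc: "unit_of (1 - c)" unfolding unit_of_def
    by (rule exI[of _ "1+c"]) (simp add: algebra_simps cc)
  define W where "W = x + (1-c)*(1-b)"
  have "unit_of W" unfolding W_def using Delta_unit x unit_mult ub uc by blast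
  then obtain V where V: "W*V = 1" "V*W = 1" unfolding unit_of_def by blast
  have fW: "f*W = f + f*x*f" unfolding W_def b_def c_def by (simp add: algebra_simps ff ff')
  have Wf: "W*f = f + f*x*f" unfolding W_def b_def c_def by (simp add: algebra_simps ff ff')
  define P where "P = f*V*f"
  have P1: "(f + f*x*f) * P = f"
  proof -
    have "(f + f*x*f) * P = (W*f)*(f*V*f)" unfolding P_def using Wf by simp
    also have "\<dots> = (W*f)*V*f" by (simp add: mult.assoc ff')
    also have "\<dots> = f*W*V*f" using fW Wf by simp
    also have "\<dots> = f" using V ff by (simp add: mult.assoc)
    finally show ?thesis .
  qed
  have P2: "P * (f + f*x*f) = f"
  proof -
    have "P * (f + f*x*f) = (f*V*f)*(f*W)" unfolding P_def using fW by simp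
    also have "\<dots> = f*V*(f*W)" by (simp add: mult.assoc ff')
    also have "\<dots> = f*V*(W*f)" using fW Wf by simp
    also have "\<dots> = f*(V*W)*f" by (simp add: mult.assoc)
    also have "\<dots> = f" using V ff by simp
    finally show ?thesis .
  qed
  have Pf: "P*f = P" "f*P = P" unfolding P_def using ff by (simp_all add: mult.assoc ff')
  define A where "A = f + f*x*f"
  define B where "B = f*x*(1-f)"
  define G where "G = 1 - f"
  define Y where "Y = P - P*B + G"
  have e1: "1 + f*x = A + B + G" unfolding A_def B_def G_def by (simp add: algebra_simps ff ff')
  have AP: "A*P = f" using P1 A_def by simp
  have PA: "P*A = f" using P2 A_def by simp
  have fB: "f*B = B" unfolding B_def by (simp add: algebra_simps ff ff')
  have APB: "A*(P*B) = B" using AP fB by (simp add: mult.assoc[symmetric])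
  have AG: "A*G = 0" unfolding A_def G_def by (simp add: algebra_simps ff ff')
  have BP: "B*P = 0" unfolding B_def P_def by (simp add: algebra_simps ff ff')
  have BPB: "B*(P*B) = 0" using BP by (simp add: mult.assoc[symmetric])
  have BG: "B*G = B" unfolding B_def G_def by (simp add: algebra_simps ff ff')
  have GP: "G*P = 0" unfolding G_def P_def by (simp add: algebra_simps ff ff')
  have GPB: "G*(P*B) = 0" using GP by (simp add: mult.assoc[symmetric])
  have GG: "G*G = G" unfolding G_def by (simp add: algebra_simps ff ff')
  have PG: "P*G = 0" unfolding G_def P_def by (simp add: algebra_simps ff ff')
  have BA: "B*A = 0" unfolding B_def A_def by (simp add: algebra_simps ff ff')
  have PBA: "P*(B*A) = 0" using BA by simp
  have BB: "B*B = 0" unfolding B_def by (simp add: algebra_simps ff ff')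
  have PBB: "P*(B*B) = 0" using BB by simp
  have PBG: "P*(B*G) = P*B" using BG by simp
  have GA: "G*A = 0" unfolding G_def A_def by (simp add: algebra_simps ff ff')
  have GB: "G*B = 0" unfolding G_def B_def by (simp add: algebra_simps ff ff')
  have "(1 + f*x) * Y = 1" unfolding e1 Y_def
    by (simp add: distrib_left distrib_right left_diff_distrib right_diff_distrib mult.assoc
        AP APB AG BP BPB BG GP GPB GG) (simp add: G_def)
  moreover have "Y * (1 + f*x) = 1" unfolding e1 Y_def
    by (simp add: distrib_left distrib_right left_diff_distrib right_diff_distrib mult.assoc
        PA PG PBA PBB PBG GA GB GG) (simp add: G_def)
  ultimately show ?thesis unfolding unit_of_def by blast
qed


lemma tri_unit:
  fixes e x :: "'a::ring_1"
  assumes e: "e^3 = e" and x: "x \<in> Delta"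
  shows "unit_of (1 + e*x)"
proof -
  define f where "f = e*e"
  have e3: "e*(e*e) = e" using e by (simp add: power3_eq_cube mult.assoc)
  have ff: "f*f = f" unfolding f_def by (metis e3 mult.assoc)
  have ef: "e*f = e" unfolding f_def using e3 .
  have fe: "f*e = e" unfolding f_def using e3 by (simp add: mult.assoc)
  define w where "w = e + 1 - f"
  have ww: "w*w = 1" unfolding w_def using ef fe ff
    by (simp add: algebra_simps) (simp add: f_def mult.assoc)
  hence uw: "unit_of w" unfolding unit_of_def by blast
  have fw: "f*w = e" unfolding w_def using fe ff by (simp add: algebra_simps)
  have "w*x \<in> Delta" using Delta_lmult x uw by blast
  hence "unit_of (1 + f*(w*x))" using idem_unit ff by blast
  thus ?thesis using fw by (simp add: mult.assoc[symmetric])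
qed

lemma Delta_sub_Jac:
  assumes DT: "DT_ring TYPE('a::ring_1)"
  shows "(Delta::'a set) \<subseteq> Jac"
proof
  fix d :: 'a assume d: "d \<in> Delta"
  have U: "unit_of (1 + r*d)" for r
  proof -
    obtain e d1 where ed: "e \<in> Tr" "d1 \<in> Delta" "r = e + d1" using DT unfolding DT_ring_def by blast
    have "unit_of (1 + e*d)" using tri_unit ed(1) d unfolding Tr_def by blast
    moreover have "d1*d \<in> Delta" using Delta_mult ed(2) d by blast
    ultimately have "unit_of (d1*d + (1 + e*d))" using Delta_unit by blast
    thus ?thesis using ed(3) by (simp add: algebra_simps)
  qed
  show "d \<in> Jac" unfolding Jac_def
  proof (rule InterI, simp)
    fix M :: "'a set" assume M: "maximal_left_ideal M"
    hence LM: "left_ideal M" unfolding maximal_left_ideal_def by blast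
    show "d \<in> M"
    proof (rule ccontr)
      assume dM: "d \<notin> M"
      let ?I = "{m + r*d | m r. m \<in> M}"
      have LI: "left_ideal ?I" unfolding left_ideal_def
      proof (intro conjI ballI allI)
        show "0 \<in> ?I" using LM unfolding left_ideal_def by (metis (mono_tags, lifting) add_0 mem_Collect_eq mult_zero_left)
        fix a b assume "a \<in> ?I" "b \<in> ?I"
        then obtain m r m' r' where ab: "a = m + r*d" "b = m' + r'*d" "m \<in> M" "m' \<in> M" by blast
        hence "m - m' \<in> M" using LM unfolding left_ideal_def by blast
        moreover have "a - b = (m - m') + (r - r')*d" using ab by (simp add: algebra_simps)
        ultimately show "a - b \<in> ?I" by blast
      next
        fix t a assume "a \<in> ?I"
        then obtain m r where ab: "a = m + r*d" "m \<in> M" by blast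
        hence "t*m \<in> M" using LM unfolding left_ideal_def by blast
        moreover have "t*a = t*m + (t*r)*d" using ab by (simp add: algebra_simps)
        ultimately show "t*a \<in> ?I" by blast
      qed
      have sub: "M \<subseteq> ?I"
      proof
        fix m assume "m \<in> M"
        moreover have "m = m + 0*d" by simp
        ultimately show "m \<in> ?I" by blast
      qed
      have "0 \<in> M" using LM unfolding left_ideal_def by blast
      moreover have "d = 0 + 1*d" by simp
      ultimately have "d \<in> ?I" by blast
      hence "?I \<noteq> M" using dM by blast
      hence "?I = UNIV" using M LI sub unfolding maximal_left_ideal_def by blast
      hence "1 \<in> ?I" by blast
      then obtain m r where mr: "1 = m + r*d" "m \<in> M" by blast
      have "m = 1 + (-r)*d" using mr(1) by (simp add: algebra_simps)
      hence "unit_of m" using U[of "-r"] by simp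
      then obtain v where "v*m = 1" unfolding unit_of_def by blast
      moreover have "v*m \<in> M" using LM mr(2) unfolding left_ideal_def by blast
      ultimately have "1 \<in> M" by simp
      hence "\<And>r. r \<in> M" using LM unfolding left_ideal_def by (metis mult_1_right)
      thus False using M unfolding maximal_left_ideal_def by auto
    qed
  qed
qed

theorem corollary4p9:
  shows "DT_ring TYPE('a::ring_1) \<longleftrightarrow> semi_tripotent TYPE('a::ring_1)"
proof
  assume DT: "DT_ring TYPE('a)"
  show "semi_tripotent TYPE('a)" unfolding semi_tripotent_def
    using DT Delta_sub_Jac[OF DT] unfolding DT_ring_def by blast
next
  assume "semi_tripotent TYPE('a)"
  thus "DT_ring TYPE('a)" unfolding semi_tripotent_def DT_ring_def
    using Jac_sub_Delta by blast
qed

end
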